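(* $\widehat{C}_{3,0} = 2$.
   Context: $\mathcal{K}_k^n = \{\prod_{s=1}^n [\frac{i_s-1}{k}, \frac{i_s}{k}] : i_s \in \{1,\dots,k\}\}$ (cubes dividing $I^n=[0,1]^n$); $\dim$ is topological dimension; a set $S\subset I^n$ connects some opposite faces of $I^n$ if it is connected and meets both $\{z_i=0\}$ and $\{z_i=1\}$ for some $i$; $\mathbb{Z}^{n-1}$ has the $\ell^\infty$ norm; $P\subset\mathbb{Z}^{n-1}$ is $1$-connected if any two points are joined by a finite chain in $P$ with consecutive $\ell^\infty$-distances $\le 1$. $\widehat{C}_{n,m}$ is the least constant $C>0$ such that: for every $k\in\mathbb{N}$ and every $F\colon\mathcal{K}_k^n\to\mathbb{Z}^{n-1}$ with $\|F(K_1)-F(K_2)\|_\infty\le 1$ whenever $\dim(K_1\cap K_2)\ge m$, there exist a $1$-connected $P\subset\mathbb{Z}^{n-1}$ with $|P|\le C$ and $\mathcal{S}\subset F^{-1}[P]$ with $\bigcup\mathcal{S}$ connecting some opposite faces of $I^n$. (For $m=0$ the hypothesis on $F$ reads: $\|F(K_1)-F(K_2)\|_\infty\le1$ whenever $K_1\cap K_2\neq\emptyset$.) *)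

theory Defs
  imports "HOL-Analysis.Analysis"
begin

text \<open>Points of I^n are vectors of type real^'n (n = CARD('n)); values of F lie in
  int^'d (playing the role of Z^(n-1), so one instantiates CARD('d) = CARD('n) - 1).\<close>

definition grid_cube :: "nat \<Rightarrow> ('n::finite \<Rightarrow> nat) \<Rightarrow> (real^'n) set" where
  "grid_cube k i = {z. \<forall>s. (real (i s) - 1) / real k \<le> z $ s \<and> z $ s \<le> real (i s) / real k}"

definition grid_cubes :: "nat \<Rightarrow> (real^'n::finite) set set" where
  "grid_cubes k = grid_cube k ` {i. \<forall>s. 1 \<le> i s \<and> i s \<le> k}"

definition linf_dist :: "int^'d::finite \<Rightarrow> int^'d \<Rightarrow> int" where
  "linf_dist a b = Max (range (\<lambda>j. \<bar>a $ j - b $ j\<bar>))"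

definition one_connected :: "(int^'d::finite) set \<Rightarrow> bool" where
  "one_connected P \<longleftrightarrow>
     (\<forall>p\<in>P. \<forall>q\<in>P. \<exists>xs. xs \<noteq> [] \<and> hd xs = p \<and> last xs = q \<and> set xs \<subseteq> P \<and>
        (\<forall>j. Suc j < length xs \<longrightarrow> linf_dist (xs ! j) (xs ! Suc j) \<le> 1))"

definition connects_opposite_faces :: "(real^'n::finite) set \<Rightarrow> bool" where
  "connects_opposite_faces S \<longleftrightarrow>
     connected S \<and> (\<exists>i. (\<exists>z\<in>S. z $ i = 0) \<and> (\<exists>z\<in>S. z $ i = 1))"

text \<open>Hypothesis on F: adjacent cubes (dim of intersection \<ge> m) get values at
  ell-infinity distance \<le> 1.  Intersections of grid cubes are convex, so their
  topological dimension equals their affine dimension (aff_dim {} = -1).\<close>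
definition admissible_map :: "nat \<Rightarrow> nat \<Rightarrow> ((real^'n::finite) set \<Rightarrow> int^'d::finite) \<Rightarrow> bool" where
  "admissible_map k m F \<longleftrightarrow>
     (\<forall>K1\<in>grid_cubes k. \<forall>K2\<in>grid_cubes k.
        aff_dim (K1 \<inter> K2) \<ge> int m \<longrightarrow> linf_dist (F K1) (F K2) \<le> 1)"

definition good_constant :: "'n::finite itself \<Rightarrow> 'd::finite itself \<Rightarrow> nat \<Rightarrow> real \<Rightarrow> bool" where
  "good_constant _ _ m C \<longleftrightarrow>
     (\<forall>k::nat. k \<ge> 1 \<longrightarrow> (\<forall>F :: (real^'n) set \<Rightarrow> int^'d. admissible_map k m F \<longrightarrow>
        (\<exists>P \<Sigma>. one_connected P \<and> finite P \<and> real (card P) \<le> C \<and>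
             \<Sigma> \<subseteq> {K \<in> grid_cubes k. F K \<in> P} \<and> connects_opposite_faces (\<Union>\<Sigma>))))"

definition hatC :: "'n::finite itself \<Rightarrow> 'd::finite itself \<Rightarrow> nat \<Rightarrow> real" where
  "hatC tn td m = Inf {C. C > 0 \<and> good_constant tn td m C}"

end

theory Submission
  imports Defs
begin


definition idx :: "nat \<Rightarrow> ('n::finite \<Rightarrow> nat) set" where
  "idx k = {i. \<forall>s. 1 \<le> i s \<and> i s \<le> k}"

definition adjI :: "('n::finite \<Rightarrow> nat) \<Rightarrow> ('n \<Rightarrow> nat) \<Rightarrow> bool" where
  "adjI i j \<longleftrightarrow> (\<forall>s. i s \<le> j s + 1 \<and> j s \<le> i s + 1)"

lemma finite_idx: "finite (idx k :: ('n::finite \<Rightarrow> nat) set)"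
proof -
  have "idx k \<subseteq> PiE (UNIV::'n set) (\<lambda>_. {..k})"
    by (auto simp: idx_def PiE_def extensional_def)
  moreover have "finite (PiE (UNIV::'n set) (\<lambda>_. {..k}))"
    by (rule finite_PiE) auto
  ultimately show ?thesis by (rule finite_subset)
qed

lemma grid_cube_cbox: "grid_cube k i = cbox (\<chi> s. (real (i s) - 1) / real k) (\<chi> s. real (i s) / real k)"
  by (auto simp: grid_cube_def mem_box_cart)

lemma grid_cube_connected: "connected (grid_cube k i)"
  unfolding grid_cube_cbox by (simp add: convex_connected)

lemma grid_cube_closed: "closed (grid_cube k i)"
  unfolding grid_cube_cbox by (rule closed_cbox)

lemma grid_cube_inter:
  fixes i j :: "'n::finite \<Rightarrow> nat"
  assumes k: "k \<ge> 1" and i: "i \<in> idx k" and j: "j \<in> idx k"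
  shows "grid_cube k i \<inter> grid_cube k j \<noteq> {} \<longleftrightarrow> adjI i j"
proof
  assume "grid_cube k i \<inter> grid_cube k j \<noteq> {}"
  then obtain z where zi: "z \<in> grid_cube k i" and zj: "z \<in> grid_cube k j" by blast
  have kp: "real k > 0" using k by simp
  show "adjI i j" unfolding adjI_def
  proof
    fix s
    have a: "(real (i s) - 1) / real k \<le> z $ s" "z $ s \<le> real (i s) / real k"
      using zi by (auto simp: grid_cube_def)
    have b: "(real (j s) - 1) / real k \<le> z $ s" "z $ s \<le> real (j s) / real k"
      using zj by (auto simp: grid_cube_def)
    have "(real (i s) - 1) / real k \<le> real (j s) / real k" using a b by linarith
    hence "real (i s) - 1 \<le> real (j s)" using kp by (simp add: divide_le_cancel)
    moreover have "(real (j s) - 1) / real k \<le> real (i s) / real k" using a b by linarith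
    hence "real (j s) - 1 \<le> real (i s)" using kp by (simp add: divide_le_cancel)
    ultimately show "i s \<le> j s + 1 \<and> j s \<le> i s + 1" by linarith
  qed
next
  assume adj: "adjI i j"
  define z :: "real^'n" where "z = (\<chi> s. (real (max (i s) (j s)) - 1) / real k)"
  have kp: "real k > 0" using k by simp
  have "\<forall>s. (real (i s) - 1) / real k \<le> z $ s \<and> z $ s \<le> real (i s) / real k \<and>
     (real (j s) - 1) / real k \<le> z $ s \<and> z $ s \<le> real (j s) / real k"
  proof
    fix s
    have h: "i s \<le> j s + 1" "j s \<le> i s + 1" using adj unfolding adjI_def by auto
    have "real (i s) - 1 \<le> real (max (i s) (j s)) - 1" "real (max (i s) (j s)) - 1 \<le> real (i s)"
      "real (j s) - 1 \<le> real (max (i s) (j s)) - 1" "real (max (i s) (j s)) - 1 \<le> real (j s)"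
      using h by (auto simp: max_def)
    thus "(real (i s) - 1) / real k \<le> z $ s \<and> z $ s \<le> real (i s) / real k \<and>
     (real (j s) - 1) / real k \<le> z $ s \<and> z $ s \<le> real (j s) / real k"
      unfolding z_def using kp by (auto intro: divide_right_mono)
  qed
  hence "z \<in> grid_cube k i \<and> z \<in> grid_cube k j"
    unfolding grid_cube_def by auto
  thus "grid_cube k i \<inter> grid_cube k j \<noteq> {}" by blast
qed

lemma grid_cube_inj:
  assumes k: "k \<ge> 1" and "grid_cube k i = grid_cube k j"
  shows "i = j"
proof
  fix s
  have kp: "real k > 0" using k by simp
  have "(\<chi> s. real (i s) / real k) \<in> grid_cube k i" "(\<chi> s. real (j s) / real k) \<in> grid_cube k j"
    unfolding grid_cube_def by (auto intro!: divide_right_mono)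
  hence "(\<chi> s. real (i s) / real k) \<in> grid_cube k j" "(\<chi> s. real (j s) / real k) \<in> grid_cube k i"
    using assms by auto
  hence "real (i s) / real k \<le> real (j s) / real k" "real (j s) / real k \<le> real (i s) / real k"
    unfolding grid_cube_def by auto
  thus "i s = j s" using kp by (simp add: divide_le_cancel)
qed

lemma face0_in: assumes "k \<ge> 1" "u s = 1" shows "\<exists>z\<in>grid_cube k u. z $ s = 0"
proof -
  have "(\<chi> t. (real (u t) - 1) / real k) \<in> grid_cube k u"
    unfolding grid_cube_def using assms by (auto intro!: divide_right_mono)
  thus ?thesis using assms by (intro bexI[of _ "(\<chi> t. (real (u t) - 1) / real k)"]) auto
qed

lemma face1_in: assumes "k \<ge> 1" "u s = k" shows "\<exists>z\<in>grid_cube k u. z $ s = 1"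
proof -
  have "(\<chi> t. real (u t) / real k) \<in> grid_cube k u"
    unfolding grid_cube_def using assms by (auto intro!: divide_right_mono)
  thus ?thesis using assms by (intro bexI[of _ "(\<chi> t. real (u t) / real k)"]) auto
qed

lemma face0_out: assumes "k \<ge> 1" "u \<in> idx k" "z \<in> grid_cube k u" "z $ s = 0" shows "u s = 1"
proof -
  have "(real (u s) - 1) / real k \<le> z $ s" using assms(3) unfolding grid_cube_def by blast
  hence "(real (u s) - 1) / real k \<le> 0" using assms(4) by simp
  hence "real (u s) \<le> 1" using assms(1) by (simp add: divide_le_0_iff)
  moreover have "1 \<le> u s" using assms(2) unfolding idx_def by blast
  ultimately show ?thesis by linarith
qed

lemma face1_out: assumes "k \<ge> 1" "u \<in> idx k" "z \<in> grid_cube k u" "z $ s = 1" shows "u s = k"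
proof -
  have "z $ s \<le> real (u s) / real k" using assms(3) unfolding grid_cube_def by blast
  hence "1 \<le> real (u s) / real k" using assms(4) by simp
  hence "real k \<le> real (u s)" using assms(1) by (simp add: le_divide_eq)
  moreover have "u s \<le> k" using assms(2) unfolding idx_def by blast
  ultimately show ?thesis by linarith
qed

lemma nonempty_aff_dim: "(S::(real^'n::finite) set) \<noteq> {} \<longleftrightarrow> aff_dim S \<ge> 0"
  using aff_dim_empty[of S] aff_dim_geq[of S] by auto

definition Rc :: "(('n::finite \<Rightarrow> nat) \<Rightarrow> 'n) \<Rightarrow> nat \<Rightarrow> 'n \<Rightarrow> ('n \<Rightarrow> nat) \<Rightarrow> ('n \<Rightarrow> nat) \<Rightarrow> bool" where
  "Rc col k c u v \<longleftrightarrow> u \<in> idx k \<and> v \<in> idx k \<and> col u = c \<and> col v = c \<and> adjI u v"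

lemma hex:
  fixes col :: "('n::finite \<Rightarrow> nat) \<Rightarrow> 'n"
  assumes k: "k \<ge> 1"
  shows "\<exists>c u v. u \<in> idx k \<and> col u = c \<and> u c = 1 \<and> (Rc col k c)\<^sup>*\<^sup>* u v \<and> v c = k"
proof (rule ccontr)
  assume H: "\<not> ?thesis"
  define W where "W c v \<longleftrightarrow> (\<exists>u. u \<in> idx k \<and> col u = c \<and> u c = 1 \<and> (Rc col k c)\<^sup>*\<^sup>* u v)" for c v
  define d :: "('n \<Rightarrow> nat) \<Rightarrow> real^'n" where
    "d v = (\<chi> s. if s = col v then (if W (col v) v then 1 else -1) else 0)" for v
  define phi where "phi v x = (\<Prod>s\<in>UNIV. max 0 (1 - \<bar>x $ s - real (v s)\<bar>))" for v and x :: "real^'n"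
  define D where "D x = (\<Sum>v\<in>idx k. phi v x *\<^sub>R d v)" for x
  define f :: "real^'n \<Rightarrow> real^'n" where "f x = (\<chi> s. max 1 (min (real k) ((x + D x) $ s)))" for x
  define S :: "(real^'n) set" where "S = cbox (\<chi> s. 1) (\<chi> s. real k)"
  have cont: "continuous_on S f"
    unfolding f_def D_def phi_def by (intro continuous_intros)
  have fS: "f \<in> S \<rightarrow> S" unfolding f_def S_def using k by (auto simp: mem_box_cart)
  have "(\<chi> s. 1) \<in> S" unfolding S_def using k by (auto simp: mem_box_cart)
  hence Sne: "S \<noteq> {}" by blast
  have "compact S" "convex S" unfolding S_def by auto
  then obtain x where xS: "x \<in> S" and fx: "f x = x" using brouwer[OF _ _ Sne cont fS] by blast
  have xb: "1 \<le> x $ s" "x $ s \<le> real k" for s using xS unfolding S_def by (auto simp: mem_box_cart)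
  have phi_nn: "phi v x \<ge> 0" for v unfolding phi_def by (intro prod_nonneg) auto
  have phi_pos: "phi v x > 0 \<longleftrightarrow> (\<forall>s. \<bar>x $ s - real (v s)\<bar> < 1)" for v
  proof
    assume "phi v x > 0"
    hence "phi v x \<noteq> 0" by simp
    hence "\<forall>s. max 0 (1 - \<bar>x $ s - real (v s)\<bar>) \<noteq> 0" unfolding phi_def
      using prod_zero_iff[of "UNIV::'n set"] by auto
    hence nz: "max 0 (1 - \<bar>x $ s - real (v s)\<bar>) \<noteq> 0" for s by blast
    show "\<forall>s. \<bar>x $ s - real (v s)\<bar> < 1"
    proof
      fix s show "\<bar>x $ s - real (v s)\<bar> < 1" using nz[of s] by (cases "\<bar>x $ s - real (v s)\<bar> < 1") (auto simp: max_def split: if_splits)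
    qed
  next
    assume "\<forall>s. \<bar>x $ s - real (v s)\<bar> < 1"
    thus "phi v x > 0" unfolding phi_def by (intro prod_pos) auto
  qed
  define v0 where "v0 = (\<lambda>s. nat \<lfloor>x $ s\<rfloor>)"
  have v0r: "real (v0 s) = of_int \<lfloor>x $ s\<rfloor>" for s
    using xb[of s] unfolding v0_def by simp
  have v0idx: "v0 \<in> idx k" unfolding idx_def
  proof (intro CollectI allI conjI)
    fix s
    have "1 \<le> \<lfloor>x $ s\<rfloor>" using xb[of s] by (simp add: le_floor_iff)
    thus "1 \<le> v0 s" unfolding v0_def by (simp add: le_nat_iff)
    have "\<lfloor>x $ s\<rfloor> \<le> int k" using xb[of s] by (simp add: floor_le_iff)
    thus "v0 s \<le> k" unfolding v0_def by simp
  qed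
  have v0pos: "phi v0 x > 0" unfolding phi_pos
  proof
    fix s show "\<bar>x $ s - real (v0 s)\<bar> < 1" unfolding v0r
      using of_int_floor_le[of "x $ s"] real_of_int_floor_add_one_gt[of "x $ s"] by linarith
  qed
  define c where "c = col v0"
  have adjpos: "adjI v w" if "phi v x > 0" "phi w x > 0" for v w
    unfolding adjI_def
  proof
    fix s
    have "\<bar>x $ s - real (v s)\<bar> < 1" "\<bar>x $ s - real (w s)\<bar> < 1" using that phi_pos by auto
    thus "v s \<le> w s + 1 \<and> w s \<le> v s + 1" by linarith
  qed
  have adjsym: "adjI v w \<Longrightarrow> adjI w v" for v w unfolding adjI_def by auto
  have Wcons: "W c v \<longleftrightarrow> W c v0" if "v \<in> idx k" "col v = c" "phi v x > 0" for v
  proof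
    have r1: "Rc col k c v0 v" "Rc col k c v v0" unfolding Rc_def
      using that v0idx c_def adjpos[OF v0pos that(3)] adjsym by auto
    show "W c v \<Longrightarrow> W c v0" unfolding W_def using r1(2)
      by (blast intro: rtranclp.rtrancl_into_rtrancl)
    show "W c v0 \<Longrightarrow> W c v" unfolding W_def using r1(1)
      by (blast intro: rtranclp.rtrancl_into_rtrancl)
  qed
  define \<sigma> :: real where "\<sigma> = (if W c v0 then 1 else -1)"
  define T where "T = (\<Sum>v\<in>idx k. if col v = c then phi v x else 0)"
  have Dc: "D x $ c = \<sigma> * T"
  proof -
    have "D x $ c = (\<Sum>v\<in>idx k. phi v x * (d v $ c))" unfolding D_def sum_component by simp
    also have "\<dots> = (\<Sum>v\<in>idx k. \<sigma> * (if col v = c then phi v x else 0))"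
    proof (rule sum.cong[OF refl])
      fix v :: "'n \<Rightarrow> nat" assume v: "v \<in> idx k"
      show "phi v x * (d v $ c) = \<sigma> * (if col v = c then phi v x else 0)"
      proof (cases "col v = c \<and> phi v x > 0")
        case True
        then show ?thesis using Wcons[OF v] unfolding d_def \<sigma>_def by auto
      next
        case False
        then show ?thesis using phi_nn[of v] unfolding d_def by auto
      qed
    qed
    also have "\<dots> = \<sigma> * T" unfolding T_def by (simp add: sum_distrib_left)
    finally show ?thesis .
  qed
  have "phi v0 x = (if col v0 = c then phi v0 x else 0)" using c_def by simp
  also have "\<dots> \<le> T" unfolding T_def
    by (rule member_le_sum) (use v0idx phi_nn finite_idx[of k, where 'n='n] in auto)
  finally have "phi v0 x \<le> T" .
  hence Tpos: "T > 0" using v0pos by linarith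
  have xc: "x $ c = max 1 (min (real k) (x $ c + D x $ c))"
    using arg_cong[OF fx, of "\<lambda>y. y $ c"] unfolding f_def by simp
  show False
  proof (cases "W c v0")
    case True
    hence "D x $ c > 0" using Dc Tpos \<sigma>_def by simp
    hence "x $ c = real k" using xc xb[of c] by (auto simp: max_def min_def split: if_splits)
    hence "v0 c = k" unfolding v0_def by simp
    thus False using H True unfolding W_def by blast
  next
    case False
    hence "D x $ c < 0" using Dc Tpos \<sigma>_def by simp
    hence "x $ c = 1" using xc xb[of c] by (auto simp: max_def min_def split: if_splits)
    hence "v0 c = 1" unfolding v0_def by simp
    hence "W c v0" unfolding W_def using v0idx c_def by blast
    thus False using False by blast
  qed
qed


lemma L1: "\<bar>(a::int) - b\<bar> \<le> 1 \<Longrightarrow> a mod 3 = b mod 3 \<Longrightarrow> a = b" by presburger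
lemma L2: "1 \<le> (e::int) \<Longrightarrow> e \<le> 2 \<Longrightarrow> (b + e) mod 3 \<noteq> b mod 3" by presburger
lemma L3: "0 \<le> (t'::int) - t \<Longrightarrow> t' - t \<le> 2 \<Longrightarrow> 0 \<le> t' div 2 - t div 2 \<and> t' div 2 - t div 2 \<le> 1" by presburger
lemma L4: "\<bar>(t::int) - t'\<bar> \<le> 1 \<Longrightarrow> \<bar>t div 2 - t' div 2\<bar> \<le> 1" by presburger
lemma L5: "((a::int) + s) mod 3 = (b + s) mod 3 \<Longrightarrow> a mod 3 = b mod 3" by presburger

definition tsh :: "int^2 \<Rightarrow> int" where "tsh p = (if even (p$1) then p$2 else p$2 + 1)"
definition dix :: "int^2 \<Rightarrow> int" where "dix p = tsh p div 2"
definition colN :: "int^2 \<Rightarrow> int" where "colN p = (dix p + (if even (p$1) then 0 else 1)) mod 3"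
definition colZ :: "int^2 \<Rightarrow> 3" where
  "colZ p = (if colN p = 0 then 1 else if colN p = 1 then 2 else 3)"

lemma colZ_eq: assumes "colZ p = colZ q" shows "colN p = colN q"
proof -
  have "0 \<le> colN p" "colN p < 3" "0 \<le> colN q" "colN q < 3" unfolding colN_def by auto
  moreover have "(1::3) \<noteq> 2 \<and> (1::3) \<noteq> 3 \<and> (2::3) \<noteq> 3" by simp
  ultimately show ?thesis using assms unfolding colZ_def by (auto split: if_splits)
qed

lemma linf_le1: "linf_dist p q \<le> 1 \<Longrightarrow> \<bar>p $ j - q $ j\<bar> \<le> 1"
proof -
  assume a: "linf_dist p q \<le> 1"
  have "\<bar>p $ j - q $ j\<bar> \<le> linf_dist p q" unfolding linf_dist_def by (rule Max_ge) auto
  thus ?thesis using a by linarith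
qed

lemma linf_le1I: "(\<And>j. \<bar>p $ j - q $ j\<bar> \<le> 1) \<Longrightarrow> linf_dist p q \<le> 1"
  unfolding linf_dist_def by (subst Max_le_iff) auto

lemma dom:
  assumes "linf_dist p q \<le> 1" "colZ p = colZ q"
  shows "p $ 1 = q $ 1 \<and> dix p = dix q"
proof -
  have c: "colN p = colN q" using colZ_eq assms(2) .
  have hx: "\<bar>p$1 - q$1\<bar> \<le> 1" and hy: "\<bar>p$2 - q$2\<bar> \<le> 1" using linf_le1 assms(1) by auto
  show ?thesis
  proof (cases "p$1 = q$1")
    case True
    have "\<bar>tsh p - tsh q\<bar> \<le> 1" using True hy unfolding tsh_def by auto
    hence "\<bar>dix p - dix q\<bar> \<le> 1" unfolding dix_def by (rule L4)
    moreover have "dix p mod 3 = dix q mod 3" using c True unfolding colN_def by (auto intro: L5)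
    ultimately show ?thesis using True L1 by blast
  next
    case False
    hence par: "even (p$1) \<longleftrightarrow> odd (q$1)" using hx by presburger
    show ?thesis
    proof (cases "even (p$1)")
      case True
      hence tp: "tsh p = p$2" and tq: "tsh q = q$2 + 1" using par unfolding tsh_def by auto
      have "0 \<le> tsh q - tsh p \<and> tsh q - tsh p \<le> 2" using tp tq hy by auto
      hence "0 \<le> dix q - dix p \<and> dix q - dix p \<le> 1" unfolding dix_def using L3 by blast
      moreover have "dix p mod 3 = (dix q + 1) mod 3" using c True par unfolding colN_def by auto
      ultimately have False using L2[of "dix q - dix p + 1" "dix p"] by auto
      thus ?thesis ..
    next
      case False
      hence tp: "tsh p = p$2 + 1" and tq: "tsh q = q$2" using par unfolding tsh_def by auto
      have "0 \<le> tsh p - tsh q \<and> tsh p - tsh q \<le> 2" using tp tq hy by auto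
      hence "0 \<le> dix p - dix q \<and> dix p - dix q \<le> 1" unfolding dix_def using L3 by blast
      moreover have "dix q mod 3 = (dix p + 1) mod 3" using c False par unfolding colN_def by auto
      ultimately have False using L2[of "dix p - dix q + 1" "dix q"] by auto
      thus ?thesis ..
    qed
  qed
qed

definition domset :: "int^2 \<Rightarrow> (int^2) set" where
  "domset p0 = {q. q $ 1 = p0 $ 1 \<and> dix q = dix p0}"

lemma tsh_bounds: "2 * dix q \<le> tsh q \<and> tsh q \<le> 2 * dix q + 1"
  unfolding dix_def by presburger

lemma vec2_eq: "(a::int^2) = b \<longleftrightarrow> a $ 1 = b $ 1 \<and> a $ 2 = b $ 2"
  by (auto simp: vec_eq_iff forall_2)

lemma domset_props: "finite (domset p0) \<and> card (domset p0) \<le> 2 \<and> one_connected (domset p0) \<and> p0 \<in> domset p0"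
proof -
  define x where "x = p0 $ 1"
  define s :: int where "s = (if even x then 0 else 1)"
  define d where "d = dix p0"
  define mk :: "int \<Rightarrow> int^2" where "mk y = (\<chi> i. if i = 1 then x else y)" for y
  have mem: "q \<in> domset p0 \<Longrightarrow> q $ 1 = x \<and> 2 * d - s \<le> q $ 2 \<and> q $ 2 \<le> 2 * d + 1 - s" for q
    using tsh_bounds[of q] unfolding domset_def tsh_def x_def s_def d_def by (auto split: if_splits)
  have "domset p0 \<subseteq> mk ` {2 * d - s, 2 * d + 1 - s}"
  proof
    fix q assume q: "q \<in> domset p0"
    hence "q $ 2 = 2 * d - s \<or> q $ 2 = 2 * d + 1 - s" using mem by force
    moreover have "q = mk (q $ 2)" using mem[OF q] unfolding mk_def by (simp add: vec2_eq)
    ultimately show "q \<in> mk ` {2 * d - s, 2 * d + 1 - s}" by auto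
  qed
  moreover have "card (mk ` {2 * d - s, 2 * d + 1 - s}) \<le> 2"
    using card_image_le[of "{2 * d - s, 2 * d + 1 - s}" mk] by (simp add: card_insert_le_m1)
  ultimately have fc: "finite (domset p0)" "card (domset p0) \<le> 2"
    using card_mono[of "mk ` {2 * d - s, 2 * d + 1 - s}" "domset p0"] finite_subset by auto
  have oc: "one_connected (domset p0)" unfolding one_connected_def
  proof (intro ballI)
    fix p q assume p: "p \<in> domset p0" and q: "q \<in> domset p0"
    have "linf_dist p q \<le> 1"
    proof (rule linf_le1I)
      fix j :: 2
      show "\<bar>p $ j - q $ j\<bar> \<le> 1" using mem[OF p] mem[OF q] exhaust_2[of j] by auto
    qed
    thus "\<exists>xs. xs \<noteq> [] \<and> hd xs = p \<and> last xs = q \<and> set xs \<subseteq> domset p0 \<and>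
        (\<forall>j. Suc j < length xs \<longrightarrow> linf_dist (xs ! j) (xs ! Suc j) \<le> 1)"
      using p q by (intro exI[of _ "[p, q]"]) (auto simp: less_Suc_eq)
  qed
  show ?thesis using fc oc unfolding domset_def by auto
qed


lemma grid_cubes_idx: "grid_cubes k = grid_cube k ` idx k"
  unfolding grid_cubes_def idx_def ..

lemma upper:
  fixes k :: nat and F :: "(real^3) set \<Rightarrow> int^2"
  assumes k: "k \<ge> 1" and adm: "admissible_map k 0 F"
  shows "\<exists>P \<Sigma>. one_connected P \<and> finite P \<and> real (card P) \<le> 2 \<and>
             \<Sigma> \<subseteq> {K \<in> grid_cubes k. F K \<in> P} \<and> connects_opposite_faces (\<Union>\<Sigma>)"
proof -
  define col :: "(3 \<Rightarrow> nat) \<Rightarrow> 3" where "col i = colZ (F (grid_cube k i))" for i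
  obtain c u v where u: "u \<in> idx k" "col u = c" "u c = 1" and uv: "(Rc col k c)\<^sup>*\<^sup>* u v" and v: "v c = k"
    using hex[OF k, of col] by blast
  define p0 where "p0 = F (grid_cube k u)"
  define R where "R = {w. (Rc col k c)\<^sup>*\<^sup>* u w}"
  define \<Sigma> where "\<Sigma> = grid_cube k ` R"
  have adjF: "linf_dist (F (grid_cube k i)) (F (grid_cube k j)) \<le> 1"
    if "i \<in> idx k" "j \<in> idx k" "adjI i j" for i j
  proof -
    have "grid_cube k i \<inter> grid_cube k j \<noteq> {}" using grid_cube_inter[OF k that(1,2)] that(3) by blast
    hence "aff_dim (grid_cube k i \<inter> grid_cube k j) \<ge> int 0" using nonempty_aff_dim by auto
    thus ?thesis using adm that unfolding admissible_map_def grid_cubes_idx by blast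
  qed
  have inv: "w \<in> idx k \<and> col w = c \<and> F (grid_cube k w) \<in> domset p0" if "(Rc col k c)\<^sup>*\<^sup>* u w" for w
    using that
  proof (induction rule: rtranclp_induct)
    case base
    then show ?case using u domset_props[of p0] unfolding p0_def by auto
  next
    case (step y z)
    have yz: "y \<in> idx k" "z \<in> idx k" "col y = c" "col z = c" "adjI y z" using step(2) unfolding Rc_def by auto
    have "linf_dist (F (grid_cube k y)) (F (grid_cube k z)) \<le> 1" using adjF yz by blast
    moreover have "colZ (F (grid_cube k y)) = colZ (F (grid_cube k z))" using yz unfolding col_def by simp
    ultimately have "F (grid_cube k y) $ 1 = F (grid_cube k z) $ 1 \<and> dix (F (grid_cube k y)) = dix (F (grid_cube k z))"
      by (rule dom)
    then show ?case using step(3) yz unfolding domset_def by auto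
  qed
  have sub: "\<Sigma> \<subseteq> {K \<in> grid_cubes k. F K \<in> domset p0}"
    unfolding \<Sigma>_def R_def grid_cubes_idx using inv by auto
  obtain z0 where z0: "z0 \<in> grid_cube k u" "z0 $ c = 0" using face0_in[of k u c] k u(3) by blast
  define X where "X = \<Union>\<Sigma>"
  have cc: "grid_cube k w \<subseteq> connected_component_set X z0" if "(Rc col k c)\<^sup>*\<^sup>* u w" for w
    using that
  proof (induction rule: rtranclp_induct)
    case base
    show ?case
      by (rule connected_component_maximal) (use z0 grid_cube_connected in \<open>auto simp: X_def \<Sigma>_def R_def\<close>)
  next
    case (step y z)
    have yz: "y \<in> idx k" "z \<in> idx k" "adjI y z" using step(2) unfolding Rc_def by auto
    then obtain q where q: "q \<in> grid_cube k y" "q \<in> grid_cube k z" using grid_cube_inter[OF k yz(1,2)] by blast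
    have zR: "z \<in> R" using step(1,2) unfolding R_def by (blast intro: rtranclp.rtrancl_into_rtrancl)
    have "grid_cube k z \<subseteq> connected_component_set X q"
      by (rule connected_component_maximal) (use q zR grid_cube_connected in \<open>auto simp: X_def \<Sigma>_def\<close>)
    moreover have "connected_component_set X q = connected_component_set X z0"
      using step(3) q(1) by (intro connected_component_eq) auto
    ultimately show ?case by simp
  qed
  have "X = connected_component_set X z0"
  proof
    show "X \<subseteq> connected_component_set X z0"
    proof
      fix y assume "y \<in> X"
      then obtain w where "(Rc col k c)\<^sup>*\<^sup>* u w" "y \<in> grid_cube k w" unfolding X_def \<Sigma>_def R_def by auto
      thus "y \<in> connected_component_set X z0" using cc by blast
    qed
    show "connected_component_set X z0 \<subseteq> X" by (rule connected_component_subset)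
  qed
  hence conn: "connected X" by (metis connected_connected_component)
  obtain z1 where z1: "z1 \<in> grid_cube k v" "z1 $ c = 1" using face1_in[of k v c] k v by blast
  have "z0 \<in> X" "z1 \<in> X" using z0 z1 uv unfolding X_def \<Sigma>_def R_def by auto
  hence "connects_opposite_faces X" using conn z0 z1 unfolding connects_opposite_faces_def by blast
  thus ?thesis using domset_props[of p0] sub unfolding X_def
    by (intro exI[of _ "domset p0"] exI[of _ \<Sigma>]) auto
qed


lemma chain_conn:
  fixes \<Sigma> :: "(real^'n::finite) set set"
  assumes k: "k \<ge> 1" and sub: "\<Sigma> \<subseteq> grid_cubes k" and conn: "connected (\<Union>\<Sigma>)"
    and u: "u \<in> idx k" "grid_cube k u \<in> \<Sigma>" and v: "v \<in> idx k" "grid_cube k v \<in> \<Sigma>"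
  shows "(\<lambda>a b. a \<in> idx k \<and> b \<in> idx k \<and> grid_cube k a \<in> \<Sigma> \<and> grid_cube k b \<in> \<Sigma> \<and> adjI a b)\<^sup>*\<^sup>* u v"
    (is "?Q\<^sup>*\<^sup>* u v")
proof (rule ccontr)
  assume nv: "\<not> ?Q\<^sup>*\<^sup>* u v"
  define A where "A = {w. ?Q\<^sup>*\<^sup>* u w}"
  have Ai: "w \<in> idx k \<and> grid_cube k w \<in> \<Sigma>" if "w \<in> A" for w
    using that unfolding A_def
  proof -
    assume "w \<in> {w. ?Q\<^sup>*\<^sup>* u w}"
    hence "?Q\<^sup>*\<^sup>* u w" by simp
    thus ?thesis by (induction rule: rtranclp_induct) (use u in auto)
  qed
  have gidx: "grid_cubes k = grid_cube k ` idx k" unfolding grid_cubes_def idx_def ..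
  have finA: "finite A" using Ai finite_idx[of k] by (metis finite_subset subsetI)
  have finS: "finite \<Sigma>" using sub finite_idx[of k] gidx by (metis finite_imageI finite_subset)
  define S1 where "S1 = \<Union>(grid_cube k ` A)"
  define S2 where "S2 = \<Union>(\<Sigma> - grid_cube k ` A)"
  have c1: "closed S1" unfolding S1_def using finA grid_cube_closed by (intro closed_Union) auto
  have c2: "closed S2" unfolding S2_def
  proof (rule closed_Union)
    show "finite (\<Sigma> - grid_cube k ` A)" using finS by simp
    show "\<forall>T\<in>\<Sigma> - grid_cube k ` A. closed T"
    proof
      fix T assume "T \<in> \<Sigma> - grid_cube k ` A"
      hence "T \<in> grid_cube k ` idx k" using sub gidx by blast
      then obtain i where "T = grid_cube k i" by blast
      thus "closed T" using grid_cube_closed by simp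
    qed
  qed
  have cov: "\<Union>\<Sigma> \<subseteq> S1 \<union> S2" unfolding S1_def S2_def by blast
  have disj: "S1 \<inter> S2 = {}"
  proof (rule ccontr)
    assume "S1 \<inter> S2 \<noteq> {}"
    then obtain y w K where w: "w \<in> A" "y \<in> grid_cube k w" and K: "K \<in> \<Sigma>" "K \<notin> grid_cube k ` A" "y \<in> K"
      unfolding S1_def S2_def by blast
    have "K \<in> grid_cube k ` idx k" using K(1) sub gidx by blast
    then obtain w' where w': "w' \<in> idx k" "K = grid_cube k w'" by blast
    have "grid_cube k w \<inter> grid_cube k w' \<noteq> {}" using w K w' by blast
    hence "adjI w w'" using grid_cube_inter[OF k _ w'(1)] Ai[OF w(1)] by blast
    hence "?Q w w'" using Ai[OF w(1)] w' K by auto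
    hence "w' \<in> A" using w(1) unfolding A_def by (auto intro: rtranclp.rtrancl_into_rtrancl)
    thus False using K w' by blast
  qed
  have adjuu: "adjI u u" unfolding adjI_def by auto
  have "grid_cube k u \<noteq> {}" using grid_cube_inter[OF k u(1) u(1)] adjuu by auto
  moreover have "u \<in> A" unfolding A_def by simp
  ultimately have ne1: "S1 \<inter> \<Union>\<Sigma> \<noteq> {}" using u unfolding S1_def by blast
  have adjvv: "adjI v v" unfolding adjI_def by auto
  have "grid_cube k v \<noteq> {}" using grid_cube_inter[OF k v(1) v(1)] adjvv by auto
  moreover have "grid_cube k v \<notin> grid_cube k ` A"
  proof
    assume "grid_cube k v \<in> grid_cube k ` A"
    then obtain w where "w \<in> A" "grid_cube k v = grid_cube k w" by auto
    hence "v \<in> A" using grid_cube_inj[OF k] by metis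
    thus False using nv unfolding A_def by simp
  qed
  ultimately have ne2: "S2 \<inter> \<Union>\<Sigma> \<noteq> {}" using v unfolding S2_def by blast
  show False using conn c1 c2 cov disj ne1 ne2 unfolding connected_closed by blast
qed

definition col3 :: "nat \<Rightarrow> nat \<Rightarrow> nat \<Rightarrow> nat" where
  "col3 a b c = (if a = 1 then (if b = 1 then (if c = 1 then 1 else if c = 2 then 2 else 2) else if b = 2 then (if c = 1 then 0 else if c = 2 then 2 else 2) else (if c = 1 then 0 else if c = 2 then 1 else 1)) else if a = 2 then (if b = 1 then (if c = 1 then 3 else if c = 2 then 3 else 1) else if b = 2 then (if c = 1 then 0 else if c = 2 then 3 else 0) else (if c = 1 then 0 else if c = 2 then 1 else 0)) else (if b = 1 then (if c = 1 then 3 else if c = 2 then 2 else 1) else if b = 2 then (if c = 1 then 3 else if c = 2 then 3 else 0) else (if c = 1 then 2 else if c = 2 then 2 else 0)))"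
definition lab3 :: "nat \<Rightarrow> nat \<Rightarrow> nat \<Rightarrow> nat" where
  "lab3 a b c = (if a = 1 then (if b = 1 then (if c = 1 then 0 else if c = 2 then 1 else 1) else if b = 2 then (if c = 1 then 2 else if c = 2 then 1 else 1) else (if c = 1 then 2 else if c = 2 then 3 else 3)) else if a = 2 then (if b = 1 then (if c = 1 then 4 else if c = 2 then 4 else 5) else if b = 2 then (if c = 1 then 2 else if c = 2 then 4 else 6) else (if c = 1 then 2 else if c = 2 then 3 else 6)) else (if b = 1 then (if c = 1 then 4 else if c = 2 then 7 else 5) else if b = 2 then (if c = 1 then 4 else if c = 2 then 4 else 6) else (if c = 1 then 8 else if c = 2 then 8 else 6)))"

lemma col3_lt: "col3 a b c < 4" unfolding col3_def by auto

lemma chkA: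
  "\<forall>a\<in>{1,2,3::nat}. \<forall>b\<in>{1,2,3::nat}. \<forall>c\<in>{1,2,3::nat}. \<forall>a'\<in>{1,2,3::nat}. \<forall>b'\<in>{1,2,3::nat}. \<forall>c'\<in>{1,2,3::nat}.
    a \<le> a' + 1 \<and> a' \<le> a + 1 \<and> b \<le> b' + 1 \<and> b' \<le> b + 1 \<and> c \<le> c' + 1 \<and> c' \<le> c + 1 \<and>
    col3 a b c = col3 a' b' c' \<longrightarrow> lab3 a b c = lab3 a' b' c'"
  unfolding col3_def lab3_def ball_simps by simp

lemma chkB1:
  "\<forall>b\<in>{1,2,3::nat}. \<forall>c\<in>{1,2,3::nat}. \<forall>b'\<in>{1,2,3::nat}. \<forall>c'\<in>{1,2,3::nat}. col3 1 b c = col3 3 b' c' \<longrightarrow> lab3 1 b c \<noteq> lab3 3 b' c'"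
  unfolding col3_def lab3_def ball_simps by simp
lemma chkB2:
  "\<forall>a\<in>{1,2,3::nat}. \<forall>c\<in>{1,2,3::nat}. \<forall>a'\<in>{1,2,3::nat}. \<forall>c'\<in>{1,2,3::nat}. col3 a 1 c = col3 a' 3 c' \<longrightarrow> lab3 a 1 c \<noteq> lab3 a' 3 c'"
  unfolding col3_def lab3_def ball_simps by simp
lemma chkB3:
  "\<forall>a\<in>{1,2,3::nat}. \<forall>b\<in>{1,2,3::nat}. \<forall>a'\<in>{1,2,3::nat}. \<forall>b'\<in>{1,2,3::nat}. col3 a b 1 = col3 a' b' 3 \<longrightarrow> lab3 a b 1 \<noteq> lab3 a' b' 3"
  unfolding col3_def lab3_def ball_simps by simp

definition vc :: "nat \<Rightarrow> int^2" where
  "vc n = (\<chi> j. if j = 1 then int (n div 2 mod 2) else int (n mod 2))"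

lemma vc_inj: assumes "n < 4" "m < 4" "vc n = vc m" shows "n = m"
proof -
  have "vc n $ 1 = vc m $ 1" "vc n $ 2 = vc m $ 2" using assms(3) by auto
  hence e: "n div 2 mod 2 = m div 2 mod 2" "n mod 2 = m mod 2" unfolding vc_def by auto
  have "n = 0 \<or> n = 1 \<or> n = 2 \<or> n = 3" "m = 0 \<or> m = 1 \<or> m = 2 \<or> m = 3" using assms(1,2) by auto
  thus ?thesis using e by auto
qed

lemma vc_adm: "linf_dist (vc n) (vc m) \<le> 1"
proof (rule linf_le1I)
  fix j :: 2
  have g: "x \<le> 1 \<Longrightarrow> y \<le> 1 \<Longrightarrow> \<bar>int x - int y\<bar> \<le> 1" for x y :: nat by auto
  have "n div 2 mod 2 \<le> 1" "m div 2 mod 2 \<le> 1" "n mod 2 \<le> 1" "m mod 2 \<le> 1" by auto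
  hence "\<bar>int (n div 2 mod 2) - int (m div 2 mod 2)\<bar> \<le> 1" "\<bar>int (n mod 2) - int (m mod 2)\<bar> \<le> 1"
    using g by auto
  thus "\<bar>vc n $ j - vc m $ j\<bar> \<le> 1" unfolding vc_def by auto
qed

lemma idx3_mem: "u \<in> idx 3 \<Longrightarrow> u s \<in> {1,2,3::nat}"
  unfolding idx_def by (auto simp: le_Suc_eq numeral_3_eq_3)

lemma lower:
  assumes C: "C < 2"
  shows "\<not> good_constant TYPE(3) TYPE(2) 0 C"
proof
  assume good: "good_constant TYPE(3) TYPE(2) 0 C"
  define cI :: "(3 \<Rightarrow> nat) \<Rightarrow> nat" where "cI u = col3 (u 1) (u 2) (u 3)" for u
  define lI :: "(3 \<Rightarrow> nat) \<Rightarrow> nat" where "lI u = lab3 (u 1) (u 2) (u 3)" for u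
  define F :: "(real^3) set \<Rightarrow> int^2" where "F K = vc (cI (inv_into (idx 3) (grid_cube 3) K))" for K
  have k: "(3::nat) \<ge> 1" by simp
  have gidx: "grid_cubes 3 = grid_cube 3 ` (idx 3 :: (3 \<Rightarrow> nat) set)" unfolding grid_cubes_def idx_def ..
  have inj: "inj_on (grid_cube 3) (idx 3 :: (3 \<Rightarrow> nat) set)"
    by (rule inj_onI) (use grid_cube_inj[OF k] in blast)
  have Fc: "F (grid_cube 3 u) = vc (cI u)" if "u \<in> idx 3" for u
    unfolding F_def using inv_into_f_f[OF inj that] by simp
  have adm: "admissible_map 3 0 F" unfolding admissible_map_def F_def using vc_adm by blast
  obtain P \<Sigma> where P: "one_connected P" "finite P" "real (card P) \<le> C"
    and \<Sigma>: "\<Sigma> \<subseteq> {K \<in> grid_cubes 3. F K \<in> P}" and co: "connects_opposite_faces (\<Union>\<Sigma>)"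
    using good adm unfolding good_constant_def by (meson k)
  have cP: "card P \<le> Suc 0" using P(3) C by linarith
  have Psing: "a = b" if "a \<in> P" "b \<in> P" for a b using cP P(2) that card_le_Suc0_iff_eq by blast
  obtain s z0 z1 where conn: "connected (\<Union>\<Sigma>)" and z0: "z0 \<in> \<Union>\<Sigma>" "z0 $ s = 0"
    and z1: "z1 \<in> \<Union>\<Sigma>" "z1 $ s = 1" using co unfolding connects_opposite_faces_def by blast
  have sub: "\<Sigma> \<subseteq> grid_cubes 3" using \<Sigma> by blast
  obtain u where u: "u \<in> idx 3" "grid_cube 3 u \<in> \<Sigma>" "z0 \<in> grid_cube 3 u"
    using z0(1) sub gidx by auto
  obtain v where v: "v \<in> idx 3" "grid_cube 3 v \<in> \<Sigma>" "z1 \<in> grid_cube 3 v"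
    using z1(1) sub gidx by auto
  have us: "u s = 1" using face0_out[OF k u(1) u(3) z0(2)] .
  have vs: "v s = 3" using face1_out[OF k v(1) v(3) z1(2)] .
  have cIeq: "cI a = cI b" if "a \<in> idx 3" "b \<in> idx 3" "grid_cube 3 a \<in> \<Sigma>" "grid_cube 3 b \<in> \<Sigma>" for a b
  proof -
    have "F (grid_cube 3 a) \<in> P" "F (grid_cube 3 b) \<in> P" using \<Sigma> that by auto
    hence "vc (cI a) = vc (cI b)" using Psing Fc that by metis
    thus ?thesis using vc_inj col3_lt unfolding cI_def by blast
  qed
  have ch: "(\<lambda>a b. a \<in> idx 3 \<and> b \<in> idx 3 \<and> grid_cube 3 a \<in> \<Sigma> \<and> grid_cube 3 b \<in> \<Sigma> \<and> adjI a b)\<^sup>*\<^sup>* u v"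
    by (rule chain_conn[OF k sub conn u(1,2) v(1,2)])
  have "lI u = lI w" if "(\<lambda>a b. a \<in> idx 3 \<and> b \<in> idx 3 \<and> grid_cube 3 a \<in> \<Sigma> \<and> grid_cube 3 b \<in> \<Sigma> \<and> adjI a b)\<^sup>*\<^sup>* u w" for w
    using that
  proof (induction rule: rtranclp_induct)
    case base then show ?case by simp
  next
    case (step y z)
    have yz: "y \<in> idx 3" "z \<in> idx 3" "grid_cube 3 y \<in> \<Sigma>" "grid_cube 3 z \<in> \<Sigma>" "adjI y z" using step(2) by auto
    have "cI y = cI z" using cIeq yz by blast
    moreover have "y t \<le> z t + 1 \<and> z t \<le> y t + 1" for t using yz(5) unfolding adjI_def by auto
    ultimately have "lI y = lI z" unfolding cI_def lI_def
      by (intro chkA[rule_format]) (use idx3_mem[OF yz(1)] idx3_mem[OF yz(2)] in auto)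
    then show ?case using step(3) by simp
  qed
  hence lab: "lI u = lI v" using ch by blast
  have col: "cI u = cI v" using cIeq u v by blast
  have m: "u t \<in> {1,2,3}" "v t \<in> {1,2,3}" for t using idx3_mem u(1) v(1) by auto
  have "s = 1 \<or> s = 2 \<or> s = 3" by (rule exhaust_3)
  thus False
  proof (elim disjE)
    assume 1: "s = 1"
    hence "lab3 1 (u 2) (u 3) \<noteq> lab3 3 (v 2) (v 3)"
      by (intro chkB1[rule_format]) (use m us vs col in \<open>auto simp: cI_def\<close>)
    thus False using lab 1 us vs unfolding lI_def by simp
  next
    assume 2: "s = 2"
    hence "lab3 (u 1) 1 (u 3) \<noteq> lab3 (v 1) 3 (v 3)"
      by (intro chkB2[rule_format]) (use m us vs col in \<open>auto simp: cI_def\<close>)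
    thus False using lab 2 us vs unfolding lI_def by simp
  next
    assume 3: "s = 3"
    hence "lab3 (u 1) (u 2) 1 \<noteq> lab3 (v 1) (v 2) 3"
      by (intro chkB3[rule_format]) (use m us vs col in \<open>auto simp: cI_def\<close>)
    thus False using lab 3 us vs unfolding lI_def by simp
  qed
qed


lemma good_mono:
  assumes "good_constant TYPE(3) TYPE(2) 0 C" "C \<le> C'"
  shows "good_constant TYPE(3) TYPE(2) 0 C'"
  using assms unfolding good_constant_def by (meson order_trans)

lemma good2: "good_constant TYPE(3) TYPE(2) 0 2"
  unfolding good_constant_def using upper by blast

theorem corollary5p4:
  shows "hatC TYPE(3) TYPE(2) 0 = 2"
proof -
  have "{C. C > 0 \<and> good_constant TYPE(3) TYPE(2) 0 C} = {2..}"
  proof (intro set_eqI iffI)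
    fix C assume "C \<in> {C. C > 0 \<and> good_constant TYPE(3) TYPE(2) 0 C}"
    hence "good_constant TYPE(3) TYPE(2) 0 C" by simp
    hence "\<not> C < 2" using lower by blast
    thus "C \<in> {2..}" by simp
  next
    fix C :: real assume "C \<in> {2..}"
    hence "C \<ge> 2" by simp
    thus "C \<in> {C. C > 0 \<and> good_constant TYPE(3) TYPE(2) 0 C}"
      using good_mono[OF good2] by auto
  qed
  thus ?thesis unfolding hatC_def by (simp add: cInf_atLeast)
qed

end
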